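(* Let $N\ge 2$ and let $P_1,\dots,P_N$ be probability densities on a feature space $\mathcal{X}$, and let $\overline{P}=\frac{1}{N}\sum_{i=1}^N P_i$. Let $\mathcal{D}^*$ be the optimal discriminator for the least-squares objective $J_{\mathcal D}=\sum_{i=1}^N \mathbb{E}_{\mathbf f\sim P_i}\big[\sum_{j=1}^N(\mathcal{D}_j(\mathbf f)-\mathbb{1}_{\{i=j\}})^2\big]$ over discriminators $\mathcal D:\mathcal X\to\{v\in\mathbb{R}^N: v_i\ge 0,\ \sum_i v_i=1\}$, namely $\mathcal{D}^*_i(\mathbf f)=P_i(\mathbf f)/\sum_{j=1}^N P_j(\mathbf f)$. Define the domain loss of the feature extractor as $$J^{\mathcal D}_{\mathcal F_s}=\sum_{i=1}^N \mathbb{E}_{\mathbf f\sim P_i}\Big[\sum_{j=1}^N\Big(\mathcal{D}^*_j(\mathbf f)-\frac1N\Big)^2\Big].$$ Then $$J^{\mathcal D}_{\mathcal F_s}=\frac1N\sum_{i=1}^N \chi^2_{\mathrm{Neyman}}(P_i\,\|\,\overline{P}),$$ where $\chi^2_{\mathrm{Neyman}}(P_i\|\overline P)=\int \frac{(P_i(\mathbf f)-\overline P(\mathbf f))^2}{\overline P(\mathbf f)}\,d\mathbf f$.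
   Context: In the paper, $P_i$ is the distribution of shared features $\mathcal F_s(x)$ for inputs $x$ from domain $i$; the paper calls the divergence $\int (P-\overline P)^2/\overline P$ the Neyman $\chi^2$ divergence of $P$ from $\overline P$. *)

theory Defs
  imports "HOL-Analysis.Analysis"
begin

definition prob_density :: "'a measure \<Rightarrow> ('a \<Rightarrow> real) \<Rightarrow> bool" where
  "prob_density M p \<longleftrightarrow> p \<in> borel_measurable M \<and> (\<forall>x\<in>space M. 0 \<le> p x)
     \<and> integrable M p \<and> (LINT x|M. p x) = 1"

definition Pbar :: "nat \<Rightarrow> (nat \<Rightarrow> 'a \<Rightarrow> real) \<Rightarrow> 'a \<Rightarrow> real" where
  "Pbar N P x = (\<Sum>i=1..N. P i x) / real N"

definition Dstar :: "nat \<Rightarrow> (nat \<Rightarrow> 'a \<Rightarrow> real) \<Rightarrow> nat \<Rightarrow> 'a \<Rightarrow> real" where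
  "Dstar N P j x = P j x / (\<Sum>k=1..N. P k x)"

definition expect_dens :: "'a measure \<Rightarrow> ('a \<Rightarrow> real) \<Rightarrow> ('a \<Rightarrow> real) \<Rightarrow> real" where
  "expect_dens M p g = integral\<^sup>L (density M (\<lambda>x. ennreal (p x))) g"

definition domain_loss :: "'a measure \<Rightarrow> nat \<Rightarrow> (nat \<Rightarrow> 'a \<Rightarrow> real) \<Rightarrow> real" where
  "domain_loss M N P = (\<Sum>i=1..N. expect_dens M (P i)
      (\<lambda>f. \<Sum>j=1..N. (Dstar N P j f - 1 / real N)\<^sup>2))"

definition neyman_chi2 :: "'a measure \<Rightarrow> ('a \<Rightarrow> real) \<Rightarrow> ('a \<Rightarrow> real) \<Rightarrow> real" where
  "neyman_chi2 M Q R = (LINT x|M. (Q x - R x)\<^sup>2 / R x)"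

end

theory Submission
  imports Defs
begin

lemma pointwise:
  fixes p :: "nat \<Rightarrow> real" and N :: nat
  assumes N: "N \<ge> 1" and nn: "\<And>k. k \<in> {1..N} \<Longrightarrow> 0 \<le> p k"
  shows "(\<Sum>i=1..N. p i * (\<Sum>j=1..N. (p j / (\<Sum>k=1..N. p k) - 1 / real N)\<^sup>2))
       = (1 / real N) * (\<Sum>i=1..N. (p i - (\<Sum>k=1..N. p k) / real N)\<^sup>2 / ((\<Sum>k=1..N. p k) / real N))"
proof (cases "(\<Sum>k=1..N. p k) = 0")
  case True
  then have "\<forall>k\<in>{1..N}. p k = 0" using nn by (subst sum_nonneg_eq_0_iff[symmetric]) auto
  then show ?thesis using True by simp
next
  case False
  define S where "S = (\<Sum>k=1..N. p k)"
  have S: "S \<noteq> 0" using False S_def by simp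
  have NN: "real N \<noteq> 0" using N by simp
  have e1: "\<And>j. (p j / S - 1 / real N)\<^sup>2 = (p j - S / real N)\<^sup>2 / S\<^sup>2"
    using S NN by (simp add: power_divide[symmetric] diff_divide_distrib)
  have "(\<Sum>i=1..N. p i * (\<Sum>j=1..N. (p j / S - 1 / real N)\<^sup>2))
      = S * ((\<Sum>j=1..N. (p j - S / real N)\<^sup>2) / S\<^sup>2)"
  proof -
    have f: "(\<Sum>i=1..N. p i * X) = S * X" for X by (simp add: S_def sum_distrib_right)
    show ?thesis unfolding f e1 sum_divide_distrib[symmetric] ..
  qed
  also have "\<dots> = (\<Sum>j=1..N. (p j - S / real N)\<^sup>2) / S"
    using S by (simp add: power2_eq_square)
  also have "\<dots> = (1 / real N) * (\<Sum>i=1..N. (p i - S / real N)\<^sup>2 / (S / real N))"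
  proof -
    have q: "\<And>x. x / (S / real N) = real N * (x / S)" using NN by simp
    show ?thesis unfolding q sum_distrib_left[symmetric] sum_divide_distrib[symmetric] using NN by simp
  qed
  finally show ?thesis unfolding S_def .
qed

lemma bound:
  fixes a b :: real and N :: nat
  assumes "0 \<le> a" "0 \<le> b" "a \<le> real N * b" "N \<ge> 1"
  shows "(a - b)\<^sup>2 / b \<le> real N * (a + b)"
proof (cases "b = 0")
  case True then show ?thesis using assms by simp
next
  case False
  then have b: "b > 0" using assms by simp
  have "b \<le> real N * b" using b assms(4) by simp
  then have ab: "\<bar>a - b\<bar> \<le> real N * b" using assms by (simp add: abs_le_iff)
  have "(a - b)\<^sup>2 \<le> \<bar>a - b\<bar> * (real N * b)"
  proof -
    have "(a - b)\<^sup>2 = \<bar>a - b\<bar> * \<bar>a - b\<bar>" by (simp add: power2_eq_square)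
    also have "\<dots> \<le> \<bar>a - b\<bar> * (real N * b)" by (rule mult_left_mono) (use ab in auto)
    finally show ?thesis .
  qed
  then have "(a - b)\<^sup>2 / b \<le> \<bar>a - b\<bar> * real N" using b by (simp add: divide_le_eq)
  also have "\<dots> \<le> (a + b) * real N" using assms by (intro mult_right_mono) auto
  finally show ?thesis by (simp add: mult.commute)
qed

theorem theorem2:
  fixes M :: "'a measure" and N :: nat and P :: "nat \<Rightarrow> 'a \<Rightarrow> real"
  assumes "N \<ge> 2"
    and "\<And>i. i \<in> {1..N} \<Longrightarrow> prob_density M (P i)"
  shows "domain_loss M N P = (1 / real N) * (\<Sum>i=1..N. neyman_chi2 M (P i) (Pbar N P))"
proof -
  have meas: "\<And>i. i \<in> {1..N} \<Longrightarrow> P i \<in> borel_measurable M"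
    and nn: "\<And>i x. i \<in> {1..N} \<Longrightarrow> x \<in> space M \<Longrightarrow> 0 \<le> P i x"
    and int: "\<And>i. i \<in> {1..N} \<Longrightarrow> integrable M (P i)"
    using assms(2) unfolding prob_density_def by auto
  define g where "g = (\<lambda>f. \<Sum>j=1..N. (Dstar N P j f - 1 / real N)\<^sup>2)"
  define h where "h = (\<lambda>i x. (P i x - Pbar N P x)\<^sup>2 / Pbar N P x)"
  have gm: "g \<in> borel_measurable M" unfolding g_def Dstar_def using meas by measurable
  have Pbm: "Pbar N P \<in> borel_measurable M" unfolding Pbar_def using meas by measurable
  have hm: "\<And>i. i \<in> {1..N} \<Longrightarrow> h i \<in> borel_measurable M" unfolding h_def using meas Pbm by measurable
  have Pbi: "integrable M (Pbar N P)" unfolding Pbar_def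
    by (intro integrable_divide integrable_sum) (use int in auto)
  have dstar01: "\<And>j x. j \<in> {1..N} \<Longrightarrow> x \<in> space M \<Longrightarrow> 0 \<le> Dstar N P j x \<and> Dstar N P j x \<le> 1"
  proof -
    fix j x assume j: "j \<in> {1..N}" and x: "x \<in> space M"
    have "P j x \<le> (\<Sum>k=1..N. P k x)"
      using j x nn by (intro member_le_sum) auto
    moreover have "0 \<le> (\<Sum>k=1..N. P k x)" using x nn by (intro sum_nonneg) auto
    ultimately show "0 \<le> Dstar N P j x \<and> Dstar N P j x \<le> 1"
      unfolding Dstar_def using nn[OF j x] by (auto simp: divide_le_eq_1)
  qed
  have gb: "\<And>x. x \<in> space M \<Longrightarrow> 0 \<le> g x \<and> g x \<le> real N"
  proof -
    fix x assume x: "x \<in> space M"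
    have "\<And>j. j \<in> {1..N} \<Longrightarrow> (Dstar N P j x - 1 / real N)\<^sup>2 \<le> 1"
    proof -
      fix j assume j: "j \<in> {1..N}"
      have n1: "0 \<le> 1 / real N" "1 / real N \<le> 1" using assms(1) by auto
      have "\<bar>Dstar N P j x - 1 / real N\<bar> \<le> 1" using dstar01[OF j x] n1 unfolding abs_le_iff by linarith
      then show "(Dstar N P j x - 1 / real N)\<^sup>2 \<le> 1"
        by (metis abs_ge_zero abs_power2 power_le_one power2_abs)
    qed
    then have "g x \<le> (\<Sum>j=1..N. 1)" unfolding g_def by (intro sum_mono) auto
    then show "0 \<le> g x \<and> g x \<le> real N" unfolding g_def by (auto intro: sum_nonneg)
  qed
  have L: "\<And>i. i \<in> {1..N} \<Longrightarrow> expect_dens M (P i) g = (LINT x|M. P i x * g x)"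
    unfolding expect_dens_def
    using integral_density[OF gm, of "P i" for i] meas nn by (auto intro!: AE_I2)
  have Li: "\<And>i. i \<in> {1..N} \<Longrightarrow> integrable M (\<lambda>x. P i x * g x)"
  proof -
    fix i assume i: "i \<in> {1..N}"
    show "integrable M (\<lambda>x. P i x * g x)"
    proof (rule Bochner_Integration.integrable_bound)
      show "integrable M (\<lambda>x. real N * P i x)" using int[OF i] by auto
      show "(\<lambda>x. P i x * g x) \<in> borel_measurable M" using meas[OF i] gm by measurable
      show "AE x in M. norm (P i x * g x) \<le> norm (real N * P i x)"
      proof (rule AE_I2)
        fix x assume x: "x \<in> space M"
        have "P i x * g x \<le> P i x * real N" using gb[OF x] nn[OF i x] by (intro mult_left_mono) auto
        then show "norm (P i x * g x) \<le> norm (real N * P i x)" using gb[OF x] nn[OF i x] by (simp add: abs_mult mult.commute)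
      qed
    qed
  qed
  have Hi: "\<And>i. i \<in> {1..N} \<Longrightarrow> integrable M (h i)"
  proof -
    fix i assume i: "i \<in> {1..N}"
    show "integrable M (h i)"
    proof (rule Bochner_Integration.integrable_bound)
      show "integrable M (\<lambda>x. real N * (P i x + Pbar N P x))" using int[OF i] Pbi by auto
      show "h i \<in> borel_measurable M" using hm[OF i] .
      show "AE x in M. norm (h i x) \<le> norm (real N * (P i x + Pbar N P x))"
      proof (rule AE_I2)
        fix x assume x: "x \<in> space M"
        have "0 \<le> (\<Sum>k=1..N. P k x)" using nn x by (intro sum_nonneg) auto
        then have pb0: "0 \<le> Pbar N P x" unfolding Pbar_def by simp
        have le: "P i x \<le> real N * Pbar N P x"
          unfolding Pbar_def using assms(1) nn x i by (auto intro: member_le_sum)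
        have "h i x \<le> real N * (P i x + Pbar N P x)"
          unfolding h_def by (rule bound) (use nn[OF i x] pb0 le assms(1) in auto)
        moreover have "0 \<le> h i x" unfolding h_def using pb0 by auto
        ultimately show "norm (h i x) \<le> norm (real N * (P i x + Pbar N P x))"
          using nn[OF i x] pb0 by auto
      qed
    qed
  qed
  have "domain_loss M N P = (\<Sum>i=1..N. LINT x|M. P i x * g x)"
    unfolding domain_loss_def g_def[symmetric] using L by simp
  also have "\<dots> = (LINT x|M. (\<Sum>i=1..N. P i x * g x))"
    by (subst Bochner_Integration.integral_sum) (use Li in auto)
  also have "\<dots> = (LINT x|M. (1 / real N) * (\<Sum>i=1..N. h i x))"
  proof (rule Bochner_Integration.integral_cong[OF refl])
    fix x assume x: "x \<in> space M"
    show "(\<Sum>i=1..N. P i x * g x) = (1 / real N) * (\<Sum>i=1..N. h i x)"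
      unfolding g_def h_def Dstar_def Pbar_def
      by (rule pointwise) (use assms(1) nn x in auto)
  qed
  also have "\<dots> = (1 / real N) * (\<Sum>i=1..N. LINT x|M. h i x)"
    by (subst integral_mult_right_zero, subst Bochner_Integration.integral_sum) (use Hi in auto)
  finally show ?thesis unfolding neyman_chi2_def h_def .
qed

end
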